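(* Let $(X,\mu)$ be a standard probability space and let $T_1,\dots,T_n$ be measure-preserving Borel bijections of $(X,\mu)$ with pairwise disjoint supports. Suppose there are pairwise relatively prime integers $p_1,\dots,p_n\geq2$ such that for each $k\in\{1,\dots,n\}$, every $T_k$-orbit is finite and its cardinality divides a power of $p_k$. Then for every $k\in\{1,\dots,n\}$, $T_k$ belongs to the closure, for the uniform topology, of the group generated by $T_1T_2\cdots T_n$.
   Context: The support of $T$ is $\{x:T(x)\neq x\}$. The uniform topology on the group of measure-preserving bijections of $(X,\mu)$ (identified up to null sets) is given by the metric $d_u(T,U)=\mu(\{x:T(x)\neq U(x)\})$. *)

theory Defs
  imports "HOL-Probability.Probability"
begin

definition supp_map :: "('a \<Rightarrow> 'a) \<Rightarrow> 'a set" where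
  "supp_map T = {x. T x \<noteq> x}"

definition ipow :: "('a \<Rightarrow> 'a) \<Rightarrow> int \<Rightarrow> 'a \<Rightarrow> 'a" where
  "ipow T m = (if 0 \<le> m then T ^^ nat m else inv T ^^ nat (- m))"

definition orbit_of :: "('a \<Rightarrow> 'a) \<Rightarrow> 'a \<Rightarrow> 'a set" where
  "orbit_of T x = {ipow T m x | m. True}"

definition mp_borel_bij :: "'a measure \<Rightarrow> ('a \<Rightarrow> 'a) \<Rightarrow> bool" where
  "mp_borel_bij M T \<longleftrightarrow> bij T \<and> T \<in> measurable M M \<and> inv T \<in> measurable M M
     \<and> distr M M T = M"

definition unif_dist :: "'a measure \<Rightarrow> ('a \<Rightarrow> 'a) \<Rightarrow> ('a \<Rightarrow> 'a) \<Rightarrow> real" where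
  "unif_dist M T U = measure M {x \<in> space M. T x \<noteq> U x}"

text \<open>The product T_1 T_2 ... T_n (composition, T_n applied first).\<close>
definition comp_prod :: "(nat \<Rightarrow> 'a \<Rightarrow> 'a) \<Rightarrow> nat \<Rightarrow> 'a \<Rightarrow> 'a" where
  "comp_prod T n = foldr (\<circ>) (map T [1..<Suc n]) id"

end

theory Submission
  imports Defs
begin


lemma funpow_period_mult:
  assumes "(T ^^ r) x = x" shows "(T ^^ (r*q)) x = x"
  using assms by (induction q) (auto simp: funpow_add simp del: funpow.simps)

lemma funpow_period_mod:
  assumes "(T ^^ r) x = x" shows "(T ^^ a) x = (T ^^ (a mod r)) x"
proof -
  have "(T ^^ a) x = (T ^^ (a mod r + r * (a div r))) x" by simp
  also have "\<dots> = (T ^^ (a mod r)) ((T ^^ (r * (a div r))) x)" by (simp only: funpow_add comp_apply)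
  finally have "(T ^^ a) x = (T ^^ (a mod r)) ((T ^^ (r * (a div r))) x)" .
  then show ?thesis using funpow_period_mult[OF assms] by simp
qed

lemma inv_funpow_cancel:
  fixes T :: "'a \<Rightarrow> 'a"
  assumes "bij T" shows "(inv T ^^ n) ((T ^^ n) y) = y"
proof -
  have "inv (T ^^ n) ((T ^^ n) y) = y" using inj_fn[OF bij_is_inj[OF assms]] by (simp add: inv_f_f)
  then show ?thesis using inv_fn[OF assms] by simp
qed

lemma orbit_card_period:
  assumes b: "bij T" and f: "finite (orbit_of T x)"
  shows "(T ^^ card (orbit_of T x)) x = x"
proof -
  have sub: "{y. \<exists>n. y = (T ^^ n) x} \<subseteq> orbit_of T x"
  proof
    fix y assume "y \<in> {y. \<exists>n. y = (T ^^ n) x}"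
    then obtain n where "y = (T ^^ n) x" by blast
    then have "y = ipow T (int n) x" unfolding ipow_def by simp
    then show "y \<in> orbit_of T x" unfolding orbit_of_def by blast
  qed
  obtain r0 where r0: "r0 > 0" "(T ^^ r0) x = x"
    by (rule funpow_inj_finite[OF bij_is_inj[OF b] finite_subset[OF sub f]])
  define r where "r = (LEAST r. r > 0 \<and> (T ^^ r) x = x)"
  have r: "r > 0" "(T ^^ r) x = x"
    using LeastI[of "\<lambda>r. r > 0 \<and> (T ^^ r) x = x" r0] r0 unfolding r_def by auto
  have rmin: "\<And>s. 0 < s \<Longrightarrow> s < r \<Longrightarrow> (T ^^ s) x \<noteq> x"
    unfolding r_def using not_less_Least by blast
  have eq: "orbit_of T x = (\<lambda>i. (T ^^ i) x) ` {..<r}"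
  proof
    show "(\<lambda>i. (T ^^ i) x) ` {..<r} \<subseteq> orbit_of T x" using sub by auto
    show "orbit_of T x \<subseteq> (\<lambda>i. (T ^^ i) x) ` {..<r}"
    proof
      fix y assume "y \<in> orbit_of T x"
      then obtain m where y: "y = ipow T m x" unfolding orbit_of_def by auto
      have "\<exists>a. y = (T ^^ a) x"
      proof (cases "0 \<le> m")
        case True then have "y = (T ^^ nat m) x" using y unfolding ipow_def by simp
        then show ?thesis by blast
      next
        case False
        define k where "k = nat (-m)"
        have y': "y = (inv T ^^ k) x" using y False unfolding ipow_def k_def by simp
        have "k \<le> r * k" using r by simp
        then have e: "k + (r*k - k) = r*k" by simp
        have "(T ^^ k) ((T ^^ (r*k - k)) x) = (T ^^ (k + (r*k - k))) x"
          by (simp only: funpow_add comp_apply)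
        also have "\<dots> = (T ^^ (r*k)) x" by (simp only: e)
        also have "\<dots> = x" using funpow_period_mult[OF r(2)] .
        finally have "(T ^^ k) ((T ^^ (r*k - k)) x) = x" .
        then have "(inv T ^^ k) x = (inv T ^^ k) ((T ^^ k) ((T ^^ (r*k - k)) x))" by simp
        then have "(inv T ^^ k) x = (T ^^ (r*k - k)) x"
          using inv_funpow_cancel[OF b] by simp
        then show ?thesis using y' by blast
      qed
      then obtain a where "y = (T ^^ a) x" by blast
      then have "y = (T ^^ (a mod r)) x" using funpow_period_mod[OF r(2)] by simp
      moreover have "a mod r < r" using r by simp
      ultimately show "y \<in> (\<lambda>i. (T ^^ i) x) ` {..<r}" by blast
    qed
  qed
  have inj: "inj_on (\<lambda>i. (T ^^ i) x) {..<r}"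
  proof (rule inj_onI, rule ccontr)
    have gen: "(T ^^ (c - a)) x = x" if "(T ^^ a) x = (T ^^ c) x" "a < c" for a c
    proof -
      have "(T ^^ a) ((T ^^ (c - a)) x) = (T ^^ a) x"
      proof -
        have "(T ^^ a) ((T ^^ (c - a)) x) = (T ^^ (a + (c - a))) x" by (simp only: funpow_add comp_apply)
        also have "a + (c - a) = c" using that by simp
        finally show ?thesis using that by simp
      qed
      then show ?thesis using inj_fn[OF bij_is_inj[OF b], of a] by (meson injD)
    qed
    fix a c assume "a \<in> {..<r}" "c \<in> {..<r}" "(T ^^ a) x = (T ^^ c) x" "a \<noteq> c"
    then show False
    proof (cases "a < c")
      case True
      then have "(T ^^ (c - a)) x = x" using gen \<open>(T ^^ a) x = (T ^^ c) x\<close> by blast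
      moreover have "c - a < r" "0 < c - a" using True \<open>c \<in> {..<r}\<close> by auto
      ultimately show False using rmin by blast
    next
      case False
      then have "c < a" using \<open>a \<noteq> c\<close> by simp
      then have "(T ^^ (a - c)) x = x" using gen[of c a] \<open>(T ^^ a) x = (T ^^ c) x\<close> by simp
      moreover have "a - c < r" "0 < a - c" using \<open>c < a\<close> \<open>a \<in> {..<r}\<close> by auto
      ultimately show False using rmin by blast
    qed
  qed
  have "card (orbit_of T x) = r" using eq inj by (simp add: card_image)
  then show ?thesis using r by simp
qed



lemma comp_eta1: "(\<lambda>a b c. a (b c)) = (\<circ>)" by (auto simp: fun_eq_iff)
lemma comp_eta2: "(\<lambda>a. a) = id" by (auto simp: fun_eq_iff)

lemma foldr_comp_apply:
  assumes "distinct xs"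
    and "\<forall>i\<in>set xs. i \<noteq> j \<longrightarrow> x \<notin> supp_map (T i) \<and> T j x \<notin> supp_map (T i)"
  shows "foldr (\<circ>) (map T xs) id x = (if j \<in> set xs then T j x else x)"
  using assms
proof (induction xs)
  case Nil then show ?case by simp
next
  case (Cons a xs)
  define F where "F = foldr (\<circ>) (map T xs) id"
  have IH: "F x = (if j \<in> set xs then T j x else x)"
    unfolding F_def using Cons.IH Cons.prems by (auto simp: comp_eta1 comp_eta2)
  have st: "foldr (\<circ>) (map T (a#xs)) id x = T a (F x)" by (simp add: F_def del: foldr_map)
  show ?case
  proof (cases "a = j")
    case True
    then have "j \<notin> set xs" using Cons.prems by simp
    then show ?thesis using IH True st by (simp add: comp_eta1 comp_eta2)
  next
    case False
    then have "x \<notin> supp_map (T a)" "T j x \<notin> supp_map (T a)" using Cons.prems by auto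
    then have "T a x = x" "T a (T j x) = T j x" unfolding supp_map_def by auto
    then show ?thesis using IH False st by (simp add: comp_eta1 comp_eta2)
  qed
qed

lemma foldr_comp_meas:
  assumes "\<forall>i\<in>set xs. T i \<in> measurable M M"
  shows "foldr (\<circ>) (map T xs) id \<in> measurable M M"
  using assms
proof (induction xs)
  case Nil then show ?case by (simp add: measurable_ident)
next
  case (Cons a xs)
  define F where "F = foldr (\<circ>) (map T xs) id"
  have "foldr (\<circ>) (map T (a#xs)) id = T a \<circ> F" by (simp add: F_def del: foldr_map)
  moreover have "F \<in> measurable M M" unfolding F_def using Cons.IH Cons.prems by (auto simp: comp_eta1 comp_eta2)
  moreover have "T a \<in> measurable M M" using Cons by auto
  ultimately show ?case using measurable_comp by metis
qed



lemma crt_aux: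
  fixes q :: "nat \<Rightarrow> nat" and a :: nat
  assumes "finite J" "\<forall>j\<in>J. coprime (q j) a" "\<forall>j\<in>J. q j \<noteq> 0"
  shows "\<exists>m. m mod a = 1 mod a \<and> (\<forall>j\<in>J. q j dvd m)"
proof -
  define Q where "Q = (\<Prod>j\<in>J. q j)"
  have Q0: "Q \<noteq> 0" unfolding Q_def using assms by simp
  have cop: "coprime Q a" unfolding Q_def using assms(2) by (intro prod_coprime_left) auto
  obtain x y where xy: "Q * x = a * y + gcd Q a" using bezout_nat[OF Q0, of a] by blast
  have g: "gcd Q a = 1" using cop by simp
  have "(Q * x) mod a = (a * y + 1) mod a" using xy g by simp
  also have "\<dots> = 1 mod a" by (rule mod_mult_self4)
  finally have "(Q * x) mod a = 1 mod a" .
  moreover have "\<forall>j\<in>J. q j dvd Q * x"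
    unfolding Q_def using assms(1) by (auto intro: dvd_mult2 dvd_prodI)
  ultimately show ?thesis by blast
qed

lemma supp_inv:
  assumes "inj T" "x \<in> supp_map T" shows "T x \<in> supp_map T"
  using assms unfolding supp_map_def by (auto dest: injD)



definition Gset :: "(nat \<Rightarrow> 'a \<Rightarrow> 'a) \<Rightarrow> nat \<Rightarrow> nat \<Rightarrow> 'a set" where
  "Gset T n j = {x. \<forall>i\<in>{1..n}. i \<noteq> j \<longrightarrow> x \<notin> supp_map (T i)}"

lemma G_inv:
  assumes bij: "\<And>j. j\<in>{1..n} \<Longrightarrow> bij (T j)"
    and disj: "\<And>i j. i \<in> {1..n} \<Longrightarrow> j \<in> {1..n} \<Longrightarrow> i \<noteq> j \<Longrightarrow>
                 supp_map (T i) \<inter> supp_map (T j) = {}"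
    and j: "j \<in> {1..n}" and x: "x \<in> Gset T n j"
  shows "T j x \<in> Gset T n j"
proof (cases "x \<in> supp_map (T j)")
  case True
  have "T j x \<in> supp_map (T j)" by (rule supp_inv[OF bij_is_inj[OF bij[OF j]] True])
  then have "\<forall>i\<in>{1..n}. i \<noteq> j \<longrightarrow> T j x \<notin> supp_map (T i)"
  proof (intro ballI impI)
    fix i assume "i \<in> {1..n}" "i \<noteq> j" "T j x \<in> supp_map (T j)"
    then have "supp_map (T i) \<inter> supp_map (T j) = {}" using disj[of i j] j by simp
    then show "T j x \<notin> supp_map (T i)" using \<open>T j x \<in> supp_map (T j)\<close> by blast
  qed
  then show ?thesis unfolding Gset_def by blast
next
  case False
  then have "T j x = x" unfolding supp_map_def by simp
  then show ?thesis using x by simp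
qed

lemma S_G:
  assumes bij: "\<And>j. j\<in>{1..n} \<Longrightarrow> bij (T j)"
    and disj: "\<And>i j. i \<in> {1..n} \<Longrightarrow> j \<in> {1..n} \<Longrightarrow> i \<noteq> j \<Longrightarrow>
                 supp_map (T i) \<inter> supp_map (T j) = {}"
    and j: "j \<in> {1..n}" and x: "x \<in> Gset T n j"
  shows "comp_prod T n x = T j x"
proof -
  have y: "T j x \<in> Gset T n j" using G_inv[OF bij disj j x] by blast
  have "foldr (\<circ>) (map T [1..<Suc n]) id x = (if j \<in> set [1..<Suc n] then T j x else x)"
    by (rule foldr_comp_apply) (use x y in \<open>auto simp: Gset_def\<close>)
  moreover have "j \<in> set [1..<Suc n]" using j by auto
  ultimately show ?thesis unfolding comp_prod_def by simp
qed

lemma Spow_G: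
  assumes bij: "\<And>j. j\<in>{1..n} \<Longrightarrow> bij (T j)"
    and disj: "\<And>i j. i \<in> {1..n} \<Longrightarrow> j \<in> {1..n} \<Longrightarrow> i \<noteq> j \<Longrightarrow>
                 supp_map (T i) \<inter> supp_map (T j) = {}"
    and j: "j \<in> {1..n}" and x: "x \<in> Gset T n j"
  shows "(comp_prod T n ^^ m) x = (T j ^^ m) x \<and> (T j ^^ m) x \<in> Gset T n j"
proof (induction m)
  case 0 then show ?case using x by simp
next
  case (Suc m)
  then have a: "(comp_prod T n ^^ m) x = (T j ^^ m) x" and b: "(T j ^^ m) x \<in> Gset T n j" by auto
  have "(comp_prod T n ^^ Suc m) x = comp_prod T n ((comp_prod T n ^^ m) x)" by simp
  also have "\<dots> = T j ((T j ^^ m) x)" using a S_G[OF bij disj j b] by simp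
  finally have c: "(comp_prod T n ^^ Suc m) x = (T j ^^ Suc m) x" by simp
  have "T j ((T j ^^ m) x) \<in> Gset T n j" using G_inv[OF bij disj j b] .
  then show ?case using c by simp
qed

lemma key_pointwise:
  assumes bij: "\<And>j. j\<in>{1..n} \<Longrightarrow> bij (T j)"
    and disj: "\<And>i j. i \<in> {1..n} \<Longrightarrow> j \<in> {1..n} \<Longrightarrow> i \<noteq> j \<Longrightarrow>
                 supp_map (T i) \<inter> supp_map (T j) = {}"
    and k: "k \<in> {1..n}"
    and fin: "\<And>j. j\<in>{1..n} \<Longrightarrow> finite (orbit_of (T j) x)"
    and dv: "\<And>j. j\<in>{1..n} \<Longrightarrow> card (orbit_of (T j) x) dvd p j ^ N"
    and m1: "m mod (p k ^ N) = 1 mod (p k ^ N)"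
    and m0: "\<And>j. j\<in>{1..n} \<Longrightarrow> j \<noteq> k \<Longrightarrow> p j ^ N dvd m"
  shows "(comp_prod T n ^^ m) x = T k x"
proof (cases "x \<in> Gset T n k")
  case True
  define r where "r = card (orbit_of (T k) x)"
  have per: "(T k ^^ r) x = x" unfolding r_def using orbit_card_period[OF bij[OF k] fin[OF k]] .
  have "m mod r = 1 mod r"
    using mod_mod_cancel[OF dv[OF k], of m] mod_mod_cancel[OF dv[OF k], of 1] m1 unfolding r_def by simp
  have "(comp_prod T n ^^ m) x = (T k ^^ m) x" using Spow_G[OF bij disj k True] by blast
  also have "\<dots> = (T k ^^ (m mod r)) x" by (rule funpow_period_mod[OF per])
  also have "\<dots> = (T k ^^ (1 mod r)) x" using \<open>m mod r = 1 mod r\<close> by simp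
  also have "\<dots> = (T k ^^ 1) x" using funpow_period_mod[OF per, of 1] by simp
  finally show ?thesis by simp
next
  case False
  then obtain i where i: "i \<in> {1..n}" "i \<noteq> k" "x \<in> supp_map (T i)" unfolding Gset_def by blast
  have "\<forall>l\<in>{1..n}. l \<noteq> i \<longrightarrow> x \<notin> supp_map (T l)"
  proof (intro ballI impI)
    fix l assume "l \<in> {1..n}" "l \<noteq> i"
    then have "supp_map (T l) \<inter> supp_map (T i) = {}" using disj[of l i] i(1) by simp
    then show "x \<notin> supp_map (T l)" using i(3) by blast
  qed
  then have xi: "x \<in> Gset T n i" unfolding Gset_def by blast
  have xk: "T k x = x" using disj[OF i(1) k i(2)] i(3) unfolding supp_map_def by blast
  define r where "r = card (orbit_of (T i) x)"
  have per: "(T i ^^ r) x = x" unfolding r_def using orbit_card_period[OF bij[OF i(1)] fin[OF i(1)]] .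
  have "r dvd m" unfolding r_def using dvd_trans[OF dv[OF i(1)] m0[OF i(1) i(2)]] .
  then have "m mod r = 0" by simp
  have "(comp_prod T n ^^ m) x = (T i ^^ m) x" using Spow_G[OF bij disj i(1) xi] by blast
  also have "\<dots> = (T i ^^ (m mod r)) x" by (rule funpow_period_mod[OF per])
  also have "\<dots> = x" using \<open>m mod r = 0\<close> by simp
  finally show ?thesis using xk by simp
qed



theorem corollary6p2:
  fixes M :: "'a :: polish_space measure"
    and T :: "nat \<Rightarrow> 'a \<Rightarrow> 'a"
    and p :: "nat \<Rightarrow> nat"
    and n :: nat
  assumes std: "prob_space M" "sets M = sets borel"
    and mp: "\<And>k. k \<in> {1..n} \<Longrightarrow> mp_borel_bij M (T k)"
    and disj: "\<And>i j. i \<in> {1..n} \<Longrightarrow> j \<in> {1..n} \<Longrightarrow> i \<noteq> j \<Longrightarrow>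
                 supp_map (T i) \<inter> supp_map (T j) = {}"
    and p_ge: "\<And>k. k \<in> {1..n} \<Longrightarrow> p k \<ge> 2"
    and p_cop: "\<And>i j. i \<in> {1..n} \<Longrightarrow> j \<in> {1..n} \<Longrightarrow> i \<noteq> j \<Longrightarrow> coprime (p i) (p j)"
    and orb: "\<And>k x. k \<in> {1..n} \<Longrightarrow>
                finite (orbit_of (T k) x) \<and> (\<exists>e::nat. card (orbit_of (T k) x) dvd p k ^ e)"
  shows "\<forall>k \<in> {1..n}. \<forall>\<epsilon>>0. \<exists>m::int. unif_dist M (T k) (ipow (comp_prod T n) m) < \<epsilon>"
proof -
  interpret P: prob_space M by (rule std(1))
  have bij: "\<And>j. j \<in> {1..n} \<Longrightarrow> bij (T j)" using mp unfolding mp_borel_bij_def by blast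
  have measT: "\<And>j. j \<in> {1..n} \<Longrightarrow> T j \<in> measurable M M" using mp unfolding mp_borel_bij_def by blast
  define S where "S = comp_prod T n"
  have measS: "S \<in> measurable M M" unfolding S_def comp_prod_def
    by (rule foldr_comp_meas) (use measT in auto)
  have Mb: "measurable M M = measurable M borel" by (rule measurable_cong_sets[OF refl std(2)])
  show ?thesis
  proof (intro ballI allI impI)
    fix k and \<epsilon> :: real assume k: "k \<in> {1..n}" and eps: "\<epsilon> > 0"
    have "\<forall>N. \<exists>m. m mod (p k ^ N) = 1 mod (p k ^ N) \<and> (\<forall>j\<in>{1..n}-{k}. p j ^ N dvd m)"
    proof
      fix N
      show "\<exists>m. m mod (p k ^ N) = 1 mod (p k ^ N) \<and> (\<forall>j\<in>{1..n}-{k}. p j ^ N dvd m)"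
      proof (rule crt_aux)
        show "finite ({1..n} - {k})" by simp
        show "\<forall>j\<in>{1..n} - {k}. coprime (p j ^ N) (p k ^ N)"
          using p_cop k by auto
        show "\<forall>j\<in>{1..n} - {k}. p j ^ N \<noteq> 0"
        proof
          fix j assume "j \<in> {1..n} - {k}"
          then have "p j \<ge> 2" using p_ge by blast
          then show "p j ^ N \<noteq> 0" by simp
        qed
      qed
    qed
    from choice[OF this] obtain mf where mf:
      "\<And>N. mf N mod (p k ^ N) = 1 mod (p k ^ N)"
      "\<And>N j. j\<in>{1..n} \<Longrightarrow> j \<noteq> k \<Longrightarrow> p j ^ N dvd mf N" by blast
    define X where "X N = {x. \<forall>j\<in>{1..n}. card (orbit_of (T j) x) dvd p j ^ N}" for N
    have Xmono: "X N \<subseteq> X N'" if "N \<le> N'" for N N'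
    proof
      fix x assume "x \<in> X N"
      then have "\<forall>j\<in>{1..n}. card (orbit_of (T j) x) dvd p j ^ N'"
        unfolding X_def using le_imp_power_dvd[OF that] dvd_trans by blast
      then show "x \<in> X N'" unfolding X_def by blast
    qed
    have Xall: "\<exists>N. x \<in> X N" for x
    proof -
      have "\<forall>j\<in>{1..n}. \<exists>e. card (orbit_of (T j) x) dvd p j ^ e" using orb by blast
      then obtain ef where ef: "\<And>j. j\<in>{1..n} \<Longrightarrow> card (orbit_of (T j) x) dvd p j ^ ef j"
        by metis
      define N where "N = (\<Sum>j\<in>{1..n}. ef j)"
      have "\<forall>j\<in>{1..n}. card (orbit_of (T j) x) dvd p j ^ N"
      proof
        fix j assume j: "j \<in> {1..n}"
        have "ef j \<le> N" unfolding N_def by (rule member_le_sum) (use j in auto)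
        then show "card (orbit_of (T j) x) dvd p j ^ N"
          using ef[OF j] le_imp_power_dvd dvd_trans by blast
      qed
      then show ?thesis unfolding X_def by blast
    qed
    have ptw: "(S ^^ mf N) x = T k x" if "x \<in> X N" for x N
      unfolding S_def
    proof (rule key_pointwise[where p = p and N = N])
      show "\<And>j. j \<in> {1..n} \<Longrightarrow> bij (T j)" by (rule bij)
      show "\<And>i j. i \<in> {1..n} \<Longrightarrow> j \<in> {1..n} \<Longrightarrow> i \<noteq> j \<Longrightarrow>
                 supp_map (T i) \<inter> supp_map (T j) = {}" by (rule disj)
      show "k \<in> {1..n}" by (rule k)
      show "\<And>j. j \<in> {1..n} \<Longrightarrow> finite (orbit_of (T j) x)" using orb by blast
      show "\<And>j. j \<in> {1..n} \<Longrightarrow> card (orbit_of (T j) x) dvd p j ^ N"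
        using that unfolding X_def by blast
      show "mf N mod (p k ^ N) = 1 mod (p k ^ N)" by (rule mf(1))
      show "\<And>j. j \<in> {1..n} \<Longrightarrow> j \<noteq> k \<Longrightarrow> p j ^ N dvd mf N" by (rule mf(2))
    qed
    define D where "D N = {x\<in>space M. T k x \<noteq> (S ^^ mf N) x}" for N
    have Dm: "D N \<in> sets M" for N
    proof -
      have f1: "T k \<in> borel_measurable M" using measT[OF k] Mb by simp
      have f2: "(S ^^ mf N) \<in> borel_measurable M" using measurable_compose_n[OF measS] Mb by simp
      have E: "{x\<in>space M. T k x = (S ^^ mf N) x} \<in> sets M"
        by (rule measurable_equality_set[OF f1 f2])
      have "D N = space M - {x\<in>space M. T k x = (S ^^ mf N) x}" unfolding D_def by blast
      then show ?thesis using E by auto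
    qed
    have DX: "D N \<inter> X N = {}" for N
    proof (rule equals0I)
      fix x assume "x \<in> D N \<inter> X N"
      then have "x \<in> X N" "T k x \<noteq> (S ^^ mf N) x" unfolding D_def by auto
      then show False using ptw[of x N] by simp
    qed
    define F where "F N = (\<Union>i. D (N + i))" for N
    have Fm: "F N \<in> sets M" for N unfolding F_def by (rule sets.countable_UN) (use Dm in auto)
    have Fdec: "decseq F" unfolding decseq_Suc_iff
    proof
      fix N show "F (Suc N) \<subseteq> F N"
      proof
        fix x assume "x \<in> F (Suc N)"
        then obtain i where "x \<in> D (Suc N + i)" unfolding F_def by blast
        then have "x \<in> D (N + Suc i)" by simp
        then show "x \<in> F N" unfolding F_def by blast
      qed
    qed
    have Fempty: "(\<Inter>N. F N) = {}"
    proof (rule equals0I)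
      fix x assume x: "x \<in> (\<Inter>N. F N)"
      obtain N where N: "x \<in> X N" using Xall by blast
      from x have "x \<in> F N" by blast
      then obtain i where i: "x \<in> D (N + i)" unfolding F_def by blast
      have "x \<in> X (N + i)" using Xmono[of N "N + i"] N by auto
      then show False using i DX[of "N + i"] by blast
    qed
    have "(\<lambda>N. measure M (F N)) \<longlonglongrightarrow> measure M (\<Inter>N. F N)"
      by (rule P.finite_Lim_measure_decseq) (use Fm Fdec in auto)
    then have lim: "(\<lambda>N. measure M (F N)) \<longlonglongrightarrow> 0" using Fempty by simp
    have "eventually (\<lambda>N. measure M (F N) < \<epsilon>) sequentially"
      by (rule order_tendstoD(2)[OF lim eps])
    then obtain N where FN: "measure M (F N) < \<epsilon>" by (auto simp: eventually_sequentially)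
    have "D N \<subseteq> F N" unfolding F_def using add_0_right[of N] by (metis UN_upper UNIV_I)
    then have "measure M (D N) \<le> measure M (F N)" by (rule P.finite_measure_mono[OF _ Fm])
    moreover have "unif_dist M (T k) (ipow (comp_prod T n) (int (mf N))) = measure M (D N)"
      unfolding unif_dist_def ipow_def D_def S_def by simp
    ultimately have "unif_dist M (T k) (ipow (comp_prod T n) (int (mf N))) < \<epsilon>" using FN by simp
    then show "\<exists>m::int. unif_dist M (T k) (ipow (comp_prod T n) m) < \<epsilon>" by blast
  qed
qed


end
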